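(* Let $R$ be a $*$-ring. The following are equivalent: (1) $R$ is strongly $\pi$-$*$-regular. (2) $R$ is $\pi$-regular and every idempotent of $R$ is a projection. (3) For every $a\in R$ there exist $n\geq 1$ and a projection $p\in R$ such that $a^nR=pR$, and $R$ is abelian. (4) For every $a\in R$ there exists $n\geq 1$ such that $a^n$ is strongly $*$-regular. (5) For every $a\in R$ there exist a projection $p$ and a unit $u$ of $R$ such that $a=p+u$ and $ap$ is nilpotent; and $v^{-1}qv$ is a projection for every unit $v\in U(R)$ and every projection $q$ of $R$.
   Context: Rings are associative with identity. A $*$-ring is a ring $R$ with a map $*:R\to R$ satisfying $(x+y)^*=x^*+y^*$, $(xy)^*=y^*x^*$, $(x^* )^*=x$. A projection is an element $p$ with $p^2=p=p^*$. $U(R)$ denotes the units of $R$. $R$ is abelian if all idempotents are central. $R$ is $\pi$-regular if for each $a\in R$ there exist $n\ge1$ and $b\in R$ with $a^n=a^nba^n$. An element $a$ is strongly $*$-regular if $a=pu=up$ for some projection $p$ and unit $u$. An element $a\in R$ is strongly $\pi$-$*$-regular if there exist a projection $e$, a unit $u$ and an integer $m\geq1$ such that $a^m=eu$ and $a,e,u$ pairwise commute; $R$ is strongly $\pi$-$*$-regular if every element is. *)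

theory Defs
  imports Main
begin

definition star_ring :: "('a::ring_1 \<Rightarrow> 'a) \<Rightarrow> bool" where
  "star_ring st \<longleftrightarrow> (\<forall>x y. st (x + y) = st x + st y) \<and> (\<forall>x y. st (x * y) = st y * st x)
     \<and> (\<forall>x. st (st x) = x)"

definition projection :: "('a::ring_1 \<Rightarrow> 'a) \<Rightarrow> 'a \<Rightarrow> bool" where
  "projection st p \<longleftrightarrow> p * p = p \<and> p = st p"

definition is_unit :: "'a::ring_1 \<Rightarrow> bool" where
  "is_unit u \<longleftrightarrow> (\<exists>v. u * v = 1 \<and> v * u = 1)"

definition idempotent :: "'a::ring_1 \<Rightarrow> bool" where
  "idempotent e \<longleftrightarrow> e * e = e"

definition abelian_ring :: "'a::ring_1 itself \<Rightarrow> bool" where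
  "abelian_ring _ \<longleftrightarrow> (\<forall>e::'a. idempotent e \<longrightarrow> (\<forall>x. e * x = x * e))"

definition pi_regular :: "'a::ring_1 itself \<Rightarrow> bool" where
  "pi_regular _ \<longleftrightarrow> (\<forall>a::'a. \<exists>n\<ge>1. \<exists>b. a ^ n = a ^ n * b * a ^ n)"

definition strongly_star_regular :: "('a::ring_1 \<Rightarrow> 'a) \<Rightarrow> 'a \<Rightarrow> bool" where
  "strongly_star_regular st a \<longleftrightarrow>
     (\<exists>p u. projection st p \<and> is_unit u \<and> a = p * u \<and> a = u * p)"

definition strongly_pi_star_regular_elem :: "('a::ring_1 \<Rightarrow> 'a) \<Rightarrow> 'a \<Rightarrow> bool" where
  "strongly_pi_star_regular_elem st a \<longleftrightarrow>
     (\<exists>e u m. projection st e \<and> is_unit u \<and> m \<ge> (1::nat) \<and> a ^ m = e * u \<and>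
        a * e = e * a \<and> a * u = u * a \<and> e * u = u * e)"

definition strongly_pi_star_regular :: "('a::ring_1 \<Rightarrow> 'a) \<Rightarrow> bool" where
  "strongly_pi_star_regular st \<longleftrightarrow> (\<forall>a. strongly_pi_star_regular_elem st a)"

definition right_ideal_gen :: "'a::ring_1 \<Rightarrow> 'a set" where
  "right_ideal_gen a = {a * x | x. True}"

definition nilpotent :: "'a::ring_1 \<Rightarrow> bool" where
  "nilpotent x \<longleftrightarrow> (\<exists>k::nat. x ^ k = 0)"

end

theory Submission
  imports Defs
begin


lemma pow_commute: fixes x y :: "'a::ring_1" shows "x*y = y*x \<Longrightarrow> x^n * y = y * x^n"
  by (induction n) (simp_all, metis mult.assoc)

lemma pow_mult_commute: fixes x y :: "'a::ring_1" shows "x*y = y*x \<Longrightarrow> (x*y)^n = x^n * y^n"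
proof (induction n)
  case (Suc n)
  have "(x*y)^Suc n = x*y*(x^n*y^n)" using Suc by simp
  also have "\<dots> = x*(y*x^n)*y^n" by (simp add: mult.assoc)
  also have "\<dots> = x*(x^n*y)*y^n" using pow_commute[OF Suc.prems] by simp
  also have "\<dots> = x^Suc n * y^Suc n" by (simp add: mult.assoc)
  finally show ?case .
qed simp

lemma idem_pow: fixes f :: "'a::ring_1" shows "f*f = f \<Longrightarrow> n \<ge> 1 \<Longrightarrow> f^n = f"
proof (induction n)
  case (Suc n) then show ?case by (cases "n = 0") (auto simp: power_Suc)
qed simp

lemma geom1: fixes N :: "'a::ring_1" shows "(1 - N) * (\<Sum>i<k. N^i) = 1 - N^k"
proof (induction k)
  case (Suc k)
  have "(1-N)*(\<Sum>i<Suc k. N^i) = (1-N)*(\<Sum>i<k. N^i) + (1-N)*N^k" by (simp add: distrib_left)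
  also have "\<dots> = 1 - N^k + (N^k - N^Suc k)" using Suc by (simp add: left_diff_distrib)
  finally show ?case by simp
qed simp

lemma geom2: fixes N :: "'a::ring_1" shows "(\<Sum>i<k. N^i) * (1 - N) = 1 - N^k"
proof (induction k)
  case (Suc k)
  have "(\<Sum>i<Suc k. N^i)*(1-N) = (\<Sum>i<k. N^i)*(1-N) + N^k*(1-N)" by (simp add: distrib_right)
  also have "\<dots> = 1 - N^k + (N^k - N^Suc k)" using Suc by (simp add: right_diff_distrib power_commutes)
  finally show ?case by simp
qed simp

lemma geom_comm: fixes N p :: "'a::ring_1" shows "N*p = p*N \<Longrightarrow> (\<Sum>i<k. N^i) * p = p * (\<Sum>i<k. N^i)"
  by (simp add: sum_distrib_left sum_distrib_right pow_commute)

lemma st_basic: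
  assumes "star_ring st"
  shows "st 0 = 0" "st (-x) = - st x" "st (x - y) = st x - st y" "st 1 = 1"
    "st (x*y) = st y * st x" "st (x+y) = st x + st y" "st (st x) = x"
proof -
  have add: "\<And>x y. st (x+y) = st x + st y" and mul: "\<And>x y. st (x*y) = st y * st x"
    and inv: "\<And>x. st (st x) = x" using assms by (auto simp: star_ring_def)
  show z: "st 0 = 0" using add[of 0 0] by simp
  have n: "st (-x) = - st x" for x using add[of x "-x"] z by (simp add: eq_neg_iff_add_eq_0 add.commute)
  show "st (-x) = - st x" by (rule n)
  show "st (x - y) = st x - st y" using add[of x "-y"] n[of y] by simp
  have "st 1 * y = y" for y
  proof -
    have "st 1 * y = st 1 * st (st y)" using inv by simp
    also have "\<dots> = st (st y * 1)" using mul[of "st y" 1] by simp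
    finally show ?thesis using inv by simp
  qed
  from this[of 1] show "st 1 = 1" by simp
  show "st (x*y) = st y * st x" "st (x+y) = st x + st y" "st (st x) = x" using add mul inv by auto
qed


lemma idem_eq_proj:
  fixes f p u w :: "'a::ring_1"
  assumes "f*f = f" "f = p*u" "p*u = u*p" "p*p = p" "u*w = 1" "w*u = 1"
  shows "f = p"
proof -
  have uf: "u*f = f*u" using assms(2,3) by (metis mult.assoc)
  have wf: "w*f = f*w"
  proof -
    have "w*f = w*f*(u*w)" using assms(5) by simp
    also have "\<dots> = w*(u*f)*w" using uf by (simp add: mult.assoc)
    also have "\<dots> = f*w" using assms(6) by (simp add: mult.assoc[symmetric])
    finally show ?thesis .
  qed
  have pw: "p = f*w" using assms(2,5) by (simp add: mult.assoc)
  have pf: "p*f = f" using assms(2,4) by (simp add: mult.assoc[symmetric])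
  have "p*f = p" using pw wf assms(1) by (metis mult.assoc)
  with pf show ?thesis by simp
qed

lemma K:
  assumes S: "star_ring st" and P: "projection st f"
    and E: "st (f + f*x*(1-f)) = f + f*x*(1-f)"
  shows "f*x*(1-f) = 0"
proof -
  have ff: "f*f = f" "st f = f" using P by (auto simp: projection_def)
  have "st (f + f*x*(1-f)) = f + (1-f)*st x*f"
    using ff by (simp add: st_basic[OF S] mult.assoc)
  hence eq: "f*x*(1-f) = (1-f)*st x*f" using E by simp
  have fm: "f*(1-f) = 0" using ff by (simp add: right_diff_distrib)
  have "f*(f*x*(1-f)) = f*x*(1-f)" by (simp add: mult.assoc[symmetric] ff)
  moreover have "f*((1-f)*st x*f) = 0" using fm by (simp add: mult.assoc[symmetric])
  ultimately show ?thesis using eq by simp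
qed

lemma central_of:
  fixes f x :: "'a::ring_1"
  assumes "f*x*(1-f) = 0" "(1-f)*x*f = 0" "f*f = f" shows "f*x = x*f"
proof -
  have "f*x - f*x*f = f*x*(1-f)" by (simp add: right_diff_distrib)
  hence 1: "f*x = f*x*f" using assms(1) by simp
  have "x*f - f*x*f = (1-f)*x*f" by (simp add: left_diff_distrib)
  hence "x*f = f*x*f" using assms(2) by simp
  with 1 show ?thesis by simp
qed

lemma idem_ext: fixes f x :: "'a::ring_1" assumes "f*f = f"
  shows "(f + f*x*(1-f)) * (f + f*x*(1-f)) = f + f*x*(1-f)"
proof -
  have a: "(1-f)*f = 0" "f*(1-f) = 0" using assms by (simp_all add: algebra_simps)
  have "(f + f*x*(1-f)) * (f + f*x*(1-f)) = f*f + f*(f*x*(1-f)) + f*x*((1-f)*f) + f*x*((1-f)*f)*x*(1-f)"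
    by (simp add: algebra_simps)
  also have "\<dots> = f + f*x*(1-f)" using a assms by (simp add: mult.assoc[symmetric])
  finally show ?thesis .
qed

lemma proj_compl: assumes S: "star_ring st" "projection st f" shows "projection st (1-f)"
  using assms by (simp add: projection_def st_basic algebra_simps)

lemma abelianA:
  assumes S: "star_ring st" and H: "\<forall>e::'a::ring_1. idempotent e \<longrightarrow> projection st e"
  shows "abelian_ring TYPE('a)"
  unfolding abelian_ring_def
proof (intro allI impI)
  fix e x :: 'a assume ie: "idempotent e"
  have k: "g*x*(1-g) = 0" if "idempotent g" for g
  proof (rule K[OF S])
    show "projection st g" using H that by blast
    have "idempotent (g + g*x*(1-g))" using that idem_ext by (auto simp: idempotent_def)
    thus "st (g + g*x*(1-g)) = g + g*x*(1-g)" using H by (simp add: projection_def)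
  qed
  have "idempotent (1-e)" using ie by (simp add: idempotent_def algebra_simps)
  from k[OF this] k[OF ie] ie show "e*x = x*e" by (intro central_of) (simp_all add: idempotent_def)
qed

lemma projC:
  assumes S: "star_ring st"
    and C: "\<forall>v q w. is_unit v \<and> projection st q \<and> v * w = 1 \<and> w * v = 1 \<longrightarrow> projection st (w * q * v)"
    and P: "projection st (f::'a::ring_1)"
  shows "f*x = x*f"
proof -
  have k: "g*x*(1-g) = 0" if pg: "projection st g" for g
  proof (rule K[OF S pg])
    define n where "n = g*x*(1-g)"
    have gg: "g*g = g" using pg by (simp add: projection_def)
    have a: "(1-g)*g = 0" using gg by (simp add: algebra_simps)
    have nn: "n*n = 0" unfolding n_def using a by (simp add: mult.assoc[symmetric]) (simp add: mult.assoc)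
    have ng: "n*g = 0" unfolding n_def using a by (simp add: mult.assoc)
    have gn: "g*n = n" unfolding n_def using gg by (simp add: mult.assoc[symmetric])
    have vw: "(1+n)*(1-n) = 1" "(1-n)*(1+n) = 1" using nn by (simp_all add: algebra_simps)
    have "(1-n)*g*(1+n) = g + n" using ng gn by (simp add: algebra_simps)
    moreover have "projection st ((1-n)*g*(1+n))"
      using C vw pg unfolding is_unit_def by blast
    ultimately show "st (g + g*x*(1-g)) = g + g*x*(1-g)" unfolding n_def by (simp add: projection_def)
  qed
  from k[OF P] k[OF proj_compl[OF S P]] P show ?thesis by (intro central_of) (simp_all add: projection_def)
qed


lemma unit_decomp:
  fixes a e u w :: "'a::ring_1"
  assumes ce: "\<And>x. e*x = x*e" and ee: "e*e = e" and am: "a^Suc k = e*u"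
    and uw: "u*w = 1" "w*u = 1" and au: "a*u = u*a"
  shows "is_unit (a - (1-e))" "(a*(1-e))^Suc k = 0"
proof -
  define p where "p = 1 - e"
  have cp: "p*x = x*p" for x unfolding p_def using ce[of x] by (simp add: algebra_simps)
  have pp: "p*p = p" unfolding p_def using ee by (simp add: algebra_simps)
  have ep: "e*p = 0" unfolding p_def using ee by (simp add: algebra_simps)
  have aw: "a*w = w*a"
  proof -
    have "a*w = w*u*a*w" using uw by simp
    also have "\<dots> = w*(a*u)*w" using au by (simp add: mult.assoc)
    also have "\<dots> = w*a" using uw by (simp add: mult.assoc)
    finally show ?thesis .
  qed
  define N where "N = a*p"
  have Nm: "N^Suc k = 0"
  proof -
    have "N^Suc k = a^Suc k * p^Suc k" unfolding N_def using cp[of a] by (intro pow_mult_commute) simp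
    also have "\<dots> = e*u*p" using am idem_pow[OF pp, of "Suc k"] by simp
    also have "\<dots> = e*p*u" using cp[of u] by (simp add: mult.assoc)
    finally show ?thesis using ep by simp
  qed
  thus "(a*(1-e))^Suc k = 0" unfolding N_def p_def .
  define T where "T = (\<Sum>i<Suc k. N^i)"
  have T1a: "(1-N)*T = 1 - N^Suc k" unfolding T_def by (rule geom1)
  have T1b: "T*(1-N) = 1 - N^Suc k" unfolding T_def by (rule geom2)
  have T1: "(1-N)*T = 1" "T*(1-N) = 1" using T1a T1b Nm by simp_all
  have NT: "N*p = p*N" unfolding N_def using cp[of a] by (metis mult.assoc)
  have Tp: "T*p = p*T" unfolding T_def using geom_comm[OF NT] .
  have pN: "p*N = N" "N*p = N" unfolding N_def using cp[of a] pp by (metis mult.assoc)+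
  define c where "c = w*a^k"
  have we: "w*e*u = e" using ce[of w] uw by (metis mult.assoc mult_1_left)
  have ac: "a*c = e"
  proof -
    have "a*c = w*a^Suc k" unfolding c_def using aw by (simp add: mult.assoc[symmetric])
    thus ?thesis using am we by (simp add: mult.assoc)
  qed
  have ca: "c*a = e"
  proof -
    have "c*a = w*a^Suc k" unfolding c_def by (simp add: mult.assoc power_commutes)
    thus ?thesis using am we by (simp add: mult.assoc)
  qed
  have pmN: "p - N = p*(1-N)" "p - N = (1-N)*p" using pN pp by (simp_all add: algebra_simps)
  define z where "z = e*c - p*T"
  have x1: "(a - p)*z = 1"
  proof -
    have "(a-p)*(e*c) = a*e*c - p*e*c" by (simp add: left_diff_distrib mult.assoc)
    also have "\<dots> = e*(a*c) - e*p*c" using ce[of a] cp[of e] by (metis mult.assoc)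
    also have "\<dots> = e" using ac ee ep by simp
    finally have 1: "(a-p)*(e*c) = e" .
    have "(a-p)*(p*T) = N*T - p*T" unfolding N_def using pp by (simp add: left_diff_distrib mult.assoc[symmetric])
    also have "\<dots> = - ((p - N)*T)" by (simp add: algebra_simps)
    also have "\<dots> = - p" using pmN(1) T1(1) by (simp add: mult.assoc)
    finally have 2: "(a-p)*(p*T) = -p" .
    have "(a - p)*z = e + p" unfolding z_def using 1 2 by (simp add: right_diff_distrib)
    thus ?thesis unfolding p_def by simp
  qed
  have x2: "z*(a - p) = 1"
  proof -
    have "(e*c)*(a-p) = e*(c*a) - e*(c*p)" by (simp add: right_diff_distrib mult.assoc)
    also have "\<dots> = e*(c*a) - e*p*c" using cp[of c] by (metis mult.assoc)
    also have "\<dots> = e" using ca ee ep by simp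
    finally have 1: "(e*c)*(a-p) = e" .
    have q1: "p*T*a = T*N" unfolding N_def using Tp cp[of a] by (metis mult.assoc)
    have q2: "p*T*p = T*p" using Tp pp by (metis mult.assoc)
    have "(p*T)*(a-p) = T*N - T*p" using q1 q2 by (simp add: right_diff_distrib)
    also have "\<dots> = - (T*(p - N))" by (simp add: algebra_simps)
    also have "\<dots> = - p" using pmN(2) T1(2) by (simp add: mult.assoc[symmetric])
    finally have 2: "(p*T)*(a-p) = -p" .
    have "z*(a - p) = e + p" unfolding z_def using 1 2 by (simp add: left_diff_distrib)
    thus ?thesis unfolding p_def by simp
  qed
  show "is_unit (a - (1-e))" unfolding is_unit_def using x1 x2 unfolding p_def by blast
qed


lemma s12:
  assumes S: "star_ring st" and P: "strongly_pi_star_regular (st::'a::ring_1\<Rightarrow>'a)"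
  shows "pi_regular TYPE('a) \<and> (\<forall>e::'a. idempotent e \<longrightarrow> projection st e)"
proof
  show "pi_regular TYPE('a)" unfolding pi_regular_def
  proof
    fix a :: 'a
    obtain e u m where em: "projection st e" "is_unit u" "m \<ge> 1" "a^m = e*u" "e*u = u*e"
      using P unfolding strongly_pi_star_regular_def strongly_pi_star_regular_elem_def by blast
    obtain w where w: "u*w = 1" "w*u = 1" using em(2) unfolding is_unit_def by blast
    have ee: "e*e = e" using em(1) by (simp add: projection_def)
    have "a^m * w * a^m = e*(u*w)*e*u" using em(4) by (simp add: mult.assoc)
    also have "\<dots> = e*u" using w ee by simp
    finally have "a^m = a^m * w * a^m" using em(4) by simp
    thus "\<exists>n\<ge>1. \<exists>b. a ^ n = a ^ n * b * a ^ n" using em(3) by blast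
  qed
  show "\<forall>e::'a. idempotent e \<longrightarrow> projection st e"
  proof (intro allI impI)
    fix f :: 'a assume fi: "idempotent f"
    obtain e u m where em: "projection st e" "is_unit u" "m \<ge> 1" "f^m = e*u" "e*u = u*e"
      using P unfolding strongly_pi_star_regular_def strongly_pi_star_regular_elem_def by blast
    obtain w where w: "u*w = 1" "w*u = 1" using em(2) unfolding is_unit_def by blast
    have "f^m = f" using fi em(3) idem_pow by (auto simp: idempotent_def)
    hence fe: "f = e*u" using em(4) by simp
    have ee: "e*e = e" using em(1) by (simp add: projection_def)
    have "f = e" using idem_eq_proj[OF _ fe em(5) ee w] fi by (simp add: idempotent_def)
    thus "projection st f" using em(1) by simp
  qed
qed


lemma s21:
  assumes S: "star_ring st" and PR: "pi_regular TYPE('a)"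
    and H: "\<forall>e::'a::ring_1. idempotent e \<longrightarrow> projection st e"
  shows "strongly_pi_star_regular st"
  unfolding strongly_pi_star_regular_def strongly_pi_star_regular_elem_def
proof
  fix a :: 'a
  have ab: "\<And>e x. idempotent e \<Longrightarrow> e*x = x*(e::'a)"
    using abelianA[OF S H] unfolding abelian_ring_def by blast
  obtain n b where nb: "n \<ge> 1" "a^n = a^n*b*a^n" using PR unfolding pi_regular_def by blast
  define x where "x = a^n"
  define e where "e = x*b"
  define f where "f = b*x"
  have xbx: "x*b*x = x" using nb unfolding x_def by simp
  have ie: "idempotent e" unfolding e_def idempotent_def using xbx by (metis mult.assoc)
  have iff: "idempotent f" unfolding f_def idempotent_def using xbx by (metis mult.assoc)
  have ce: "e*y = y*e" for y using ab[OF ie] .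
  have cf: "f*y = y*f" for y using ab[OF iff] .
  have ex: "e*x = x" unfolding e_def using xbx .
  have xf: "x*f = x" unfolding f_def using xbx by (simp add: mult.assoc)
  have "e = f*e" unfolding e_def using xf cf[of x] by (metis mult.assoc)
  moreover have "f = e*f" unfolding f_def using ex ce[of b] by (metis mult.assoc)
  ultimately have ef: "e = f" using ce[of f] by simp
  have ee: "e*e = e" using ie by (simp add: idempotent_def)
  define u where "u = x + 1 - e"
  define w where "w = b*e + 1 - e"
  have xe: "x*e = x" using ex ce[of x] by simp
  have be1: "b*e*(1-e) = 0" using ee by (simp add: algebra_simps mult.assoc)
  have uw: "u*w = 1"
  proof -
    have "u*w = x*(b*e) + x*(1-e) + (1-e)*(b*e) + (1-e)*(1-e)"
      unfolding u_def w_def by (simp add: algebra_simps)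
    also have "x*(b*e) = e" unfolding e_def using ee e_def by (simp add: mult.assoc[symmetric])
    also have "x*(1-e) = 0" using xe by (simp add: right_diff_distrib)
    also have "(1-e)*(b*e) = 0" using ce[of "b*e"] ee by (simp add: left_diff_distrib mult.assoc)
    also have "(1-e)*(1-e) = 1-e" using ee by (simp add: algebra_simps)
    finally show ?thesis by simp
  qed
  have wu: "w*u = 1"
  proof -
    have "w*u = b*e*x + b*e*(1-e) + (1-e)*x + (1-e)*(1-e)"
      unfolding u_def w_def by (simp add: algebra_simps)
    also have "b*e*x = e" using ce[of x] ex ef unfolding f_def by (metis mult.assoc)
    also have "b*e*(1-e) = 0" by (rule be1)
    also have "(1-e)*x = 0" using ex by (simp add: left_diff_distrib)
    also have "(1-e)*(1-e) = 1-e" using ee by (simp add: algebra_simps)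
    finally show ?thesis by simp
  qed
  have am: "a^n = e*u" unfolding u_def x_def[symmetric] using ex ee by (simp add: right_diff_distrib distrib_left)
  have au: "a*u = u*a"
  proof -
    have "a*u = a*x + a - a*e" unfolding u_def by (simp add: algebra_simps)
    also have "a*x = x*a" unfolding x_def by (simp add: power_commutes)
    also have "a*e = e*a" using ce[of a] by simp
    also have "x*a + a - e*a = u*a" unfolding u_def by (simp add: algebra_simps)
    finally show ?thesis .
  qed
  have "projection st e" using H ie by blast
  moreover have "is_unit u" unfolding is_unit_def using uw wu by blast
  moreover have "a*e = e*a" using ce[of a] by simp
  ultimately show "\<exists>e u m. projection st e \<and> is_unit u \<and> m \<ge> 1 \<and> a ^ m = e * u \<and>
        a * e = e * a \<and> a * u = u * a \<and> e * u = u * e" using nb(1) am au ce[of u] by blast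
qed



lemma unit_pow: fixes u w :: "'a::ring_1" assumes "u*w = 1" "w*u = 1"
  shows "u^n * w^n = 1" "w^n * u^n = 1"
proof -
  show "u^n * w^n = 1"
  proof (induction n)
    case (Suc n)
    have "u^Suc n * w^Suc n = (u*u^n)*(w^n*w)" by (metis power_Suc power_Suc2)
    hence "u^Suc n * w^Suc n = u*(u^n*w^n)*w" by (simp only: mult.assoc)
    thus ?case using Suc assms by simp
  qed simp
  show "w^n * u^n = 1"
  proof (induction n)
    case (Suc n)
    have "w^Suc n * u^Suc n = (w*w^n)*(u^n*u)" by (metis power_Suc power_Suc2)
    hence "w^Suc n * u^Suc n = w*(w^n*u^n)*u" by (simp only: mult.assoc)
    thus ?case using Suc assms by simp
  qed simp
qed

lemma s23:
  assumes S: "star_ring st" and PR: "pi_regular TYPE('a)"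
    and H: "\<forall>e::'a::ring_1. idempotent e \<longrightarrow> projection st e"
  shows "(\<forall>a::'a. \<exists>n\<ge>1. \<exists>p. projection st p \<and> right_ideal_gen (a ^ n) = right_ideal_gen p)
        \<and> abelian_ring TYPE('a)"
proof
  show "abelian_ring TYPE('a)" by (rule abelianA[OF S H])
  show "\<forall>a::'a. \<exists>n\<ge>1. \<exists>p. projection st p \<and> right_ideal_gen (a ^ n) = right_ideal_gen p"
  proof
    fix a :: 'a
    obtain n b where nb: "n \<ge> 1" "a^n = a^n*b*a^n" using PR unfolding pi_regular_def by blast
    define e where "e = a^n*b"
    have ie: "idempotent e" unfolding e_def idempotent_def using nb(2) by (metis mult.assoc)
    have ea: "e*a^n = a^n" unfolding e_def using nb(2) by simp
    have "right_ideal_gen (a^n) = right_ideal_gen e"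
      unfolding right_ideal_gen_def
    proof (intro set_eqI iffI)
      fix y assume "y \<in> {a ^ n * x |x. True}"
      then obtain x where "y = a^n*x" by blast
      hence "y = e*(a^n*x)" using ea by (simp add: mult.assoc[symmetric])
      thus "y \<in> {e * x |x. True}" by blast
    next
      fix y assume "y \<in> {e * x |x. True}"
      then obtain x where "y = e*x" by blast
      hence "y = a^n*(b*x)" unfolding e_def by (simp add: mult.assoc)
      thus "y \<in> {a^n * x |x. True}" by blast
    qed
    thus "\<exists>n\<ge>1. \<exists>p. projection st p \<and> right_ideal_gen (a ^ n) = right_ideal_gen p"
      using nb(1) H ie by blast
  qed
qed

lemma s32:
  assumes S: "star_ring st"
    and R: "\<forall>a::'a::ring_1. \<exists>n\<ge>1. \<exists>p. projection st p \<and> right_ideal_gen (a ^ n) = right_ideal_gen p"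
    and A: "abelian_ring TYPE('a)"
  shows "pi_regular TYPE('a) \<and> (\<forall>e::'a. idempotent e \<longrightarrow> projection st e)"
proof -
  have key: "\<exists>x y. p = a^n*x \<and> a^n = p*y" if "right_ideal_gen (a ^ n) = right_ideal_gen p" for a p :: 'a and n
  proof -
    have "p \<in> right_ideal_gen p" "a^n \<in> right_ideal_gen (a^n)"
      unfolding right_ideal_gen_def by (metis (mono_tags, lifting) mem_Collect_eq mult_1_right)+
    thus ?thesis using that unfolding right_ideal_gen_def by blast
  qed
  have "pi_regular TYPE('a)" unfolding pi_regular_def
  proof
    fix a :: 'a
    obtain n p where np: "n \<ge> 1" "projection st p" "right_ideal_gen (a ^ n) = right_ideal_gen p"
      using R by blast
    obtain x y where xy: "p = a^n*x" "a^n = p*y" using key[OF np(3)] by blast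
    have pp: "p*p = p" using np(2) by (simp add: projection_def)
    have "a^n*x*a^n = p*a^n" using xy(1) by simp
    also have "\<dots> = p*p*y" using xy(2) by (simp add: mult.assoc)
    also have "\<dots> = a^n" using pp xy(2) by simp
    finally have "a^n = a^n*x*a^n" by simp
    thus "\<exists>n\<ge>1. \<exists>b. a ^ n = a ^ n * b * a ^ n" using np(1) by blast
  qed
  moreover have "\<forall>e::'a. idempotent e \<longrightarrow> projection st e"
  proof (intro allI impI)
    fix f :: 'a assume fi: "idempotent f"
    obtain n p where np: "n \<ge> 1" "projection st p" "right_ideal_gen (f ^ n) = right_ideal_gen p"
      using R by blast
    have ff: "f*f = f" using fi by (simp add: idempotent_def)
    have "f^n = f" using idem_pow[OF ff np(1)] .
    then obtain x y where xy: "p = f*x" "f = p*y" using key[OF np(3)] by auto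
    have pp: "p*p = p" using np(2) by (simp add: projection_def)
    have cf: "f*p = p*f" using A fi unfolding abelian_ring_def by blast
    have "p*f = f" using xy pp by (metis mult.assoc)
    moreover have "f*p = p" using xy ff by (metis mult.assoc)
    ultimately have "f = p" using cf by simp
    thus "projection st f" using np(2) by simp
  qed
  ultimately show ?thesis by blast
qed

lemma s14:
  assumes P: "strongly_pi_star_regular (st::'a::ring_1\<Rightarrow>'a)"
  shows "\<forall>a::'a. \<exists>n\<ge>1. strongly_star_regular st (a ^ n)"
proof
  fix a :: 'a
  obtain e u m where em: "projection st e" "is_unit u" "m \<ge> 1" "a^m = e*u" "e*u = u*e"
    using P unfolding strongly_pi_star_regular_def strongly_pi_star_regular_elem_def by blast
  thus "\<exists>n\<ge>1. strongly_star_regular st (a ^ n)" unfolding strongly_star_regular_def by metis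
qed

lemma s42:
  assumes P: "\<forall>a::'a::ring_1. \<exists>n\<ge>1. strongly_star_regular st (a ^ n)"
  shows "pi_regular TYPE('a) \<and> (\<forall>e::'a. idempotent e \<longrightarrow> projection st e)"
proof
  show "pi_regular TYPE('a)" unfolding pi_regular_def
  proof
    fix a :: 'a
    obtain n p u where em: "n \<ge> 1" "projection st p" "is_unit u" "a^n = p*u" "a^n = u*p"
      using P unfolding strongly_star_regular_def by blast
    obtain w where w: "u*w = 1" "w*u = 1" using em(3) unfolding is_unit_def by blast
    have pp: "p*p = p" using em(2) by (simp add: projection_def)
    have "a^n * w * a^n = p*(u*w)*p*u" using em(4) by (simp add: mult.assoc)
    also have "\<dots> = p*u" using w pp by simp
    finally have "a^n = a^n * w * a^n" using em(4) by simp
    thus "\<exists>n\<ge>1. \<exists>b. a ^ n = a ^ n * b * a ^ n" using em(1) by blast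
  qed
  show "\<forall>e::'a. idempotent e \<longrightarrow> projection st e"
  proof (intro allI impI)
    fix f :: 'a assume fi: "idempotent f"
    obtain n p u where em: "n \<ge> 1" "projection st p" "is_unit u" "f^n = p*u" "f^n = u*p"
      using P unfolding strongly_star_regular_def by blast
    obtain w where w: "u*w = 1" "w*u = 1" using em(3) unfolding is_unit_def by blast
    have ff: "f*f = f" using fi by (simp add: idempotent_def)
    have fn: "f^n = f" using idem_pow[OF ff em(1)] .
    have fe: "f = p*u" using em(4) fn by simp
    have pu: "p*u = u*p" using em(4,5) by simp
    have pp: "p*p = p" using em(2) by (simp add: projection_def)
    have "f = p" using idem_eq_proj[OF ff fe pu pp w] .
    thus "projection st f" using em(2) by simp
  qed
qed



lemma s15:
  assumes S: "star_ring st" and P: "strongly_pi_star_regular (st::'a::ring_1\<Rightarrow>'a)"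
  shows "(\<forall>a::'a. \<exists>p u. projection st p \<and> is_unit u \<and> a = p + u \<and> nilpotent (a * p))
        \<and> (\<forall>v q w. is_unit v \<and> projection st q \<and> v * w = 1 \<and> w * v = 1
                  \<longrightarrow> projection st (w * q * v))"
proof -
  have H: "\<forall>e::'a. idempotent e \<longrightarrow> projection st e" using s12[OF S P] by blast
  have ab: "\<And>e x. idempotent e \<Longrightarrow> e*x = x*(e::'a)"
    using abelianA[OF S H] unfolding abelian_ring_def by blast
  have "\<forall>v q w. is_unit v \<and> projection st q \<and> v * w = 1 \<and> w * v = 1
                  \<longrightarrow> projection st (w * q * v)"
  proof (intro allI impI)
    fix v q w :: 'a assume h: "is_unit v \<and> projection st q \<and> v * w = 1 \<and> w * v = 1"
    have qq: "q*q = q" using h by (simp add: projection_def)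
    have "(w*q*v)*(w*q*v) = w*q*(v*w)*q*v" by (simp add: mult.assoc)
    also have "\<dots> = w*q*v" using h qq by (simp add: mult.assoc)
    finally show "projection st (w*q*v)" using H by (simp add: idempotent_def)
  qed
  moreover have "\<forall>a::'a. \<exists>p u. projection st p \<and> is_unit u \<and> a = p + u \<and> nilpotent (a * p)"
  proof
    fix a :: 'a
    obtain e u m where em: "projection st e" "is_unit u" "m \<ge> 1" "a^m = e*u" "a*u = u*a"
      using P unfolding strongly_pi_star_regular_def strongly_pi_star_regular_elem_def by blast
    obtain w where w: "u*w = 1" "w*u = 1" using em(2) unfolding is_unit_def by blast
    obtain k where mk: "m = Suc k" using em(3) by (cases m) auto
    have ee: "e*e = e" using em(1) by (simp add: projection_def)
    have ce: "\<And>x. e*x = x*e" using ab ee by (simp add: idempotent_def)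
    have am: "a^Suc k = e*u" using em(4) mk by simp
    note ud = unit_decomp[OF ce ee am w em(5)]
    have "projection st (1-e)" by (rule proj_compl[OF S em(1)])
    moreover have "a = (1-e) + (a - (1-e))" by simp
    moreover have "nilpotent (a*(1-e))" unfolding nilpotent_def using ud(2) by blast
    ultimately show "\<exists>p u. projection st p \<and> is_unit u \<and> a = p + u \<and> nilpotent (a * p)"
      using ud(1) by blast
  qed
  ultimately show ?thesis by blast
qed

lemma s51:
  assumes S: "star_ring st"
    and F: "\<forall>a::'a::ring_1. \<exists>p u. projection st p \<and> is_unit u \<and> a = p + u \<and> nilpotent (a * p)"
    and C: "\<forall>v q w. is_unit v \<and> projection st q \<and> v * w = 1 \<and> w * v = 1
                  \<longrightarrow> projection st (w * q * v)"
  shows "strongly_pi_star_regular st"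
  unfolding strongly_pi_star_regular_def strongly_pi_star_regular_elem_def
proof
  fix a :: 'a
  obtain p u k where h: "projection st p" "is_unit u" "a = p + u" "(a*p)^k = 0"
    using F unfolding nilpotent_def by blast
  obtain w where w: "u*w = 1" "w*u = 1" using h(2) unfolding is_unit_def by blast
  have cp: "\<And>x. p*x = x*p" using projC[OF S C h(1)] by blast
  have pp: "p*p = p" using h(1) by (simp add: projection_def)
  define m where "m = Suc k"
  define e where "e = 1 - p"
  have ce: "e*x = x*e" for x unfolding e_def using cp[of x] by (simp add: algebra_simps)
  have ee: "e*e = e" unfolding e_def using pp by (simp add: algebra_simps)
  have pe: "p + e = 1" unfolding e_def by simp
  have ue: "a*e = u*e"
  proof -
    have "a*e = p*e + u*e" using h(3) by (simp add: distrib_right)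
    moreover have "p*e = 0" unfolding e_def using pp by (simp add: right_diff_distrib)
    ultimately show ?thesis by simp
  qed
  have apm: "(a*p)^m = 0" unfolding m_def using h(4) by simp
  have "(a*p)^m = a^m * p^m" using cp[of a] by (intro pow_mult_commute) simp
  hence amp: "a^m * p = 0" using apm idem_pow[OF pp, of m] unfolding m_def by simp
  have "(a*e)^m = a^m * e^m" using ce[of a] by (intro pow_mult_commute) simp
  hence "a^m * e = (a*e)^m" using idem_pow[OF ee, of m] unfolding m_def by simp
  also have "\<dots> = (u*e)^m" using ue by simp
  also have "\<dots> = u^m * e^m" using ce[of u] by (intro pow_mult_commute) simp
  also have "\<dots> = u^m * e" using idem_pow[OF ee, of m] unfolding m_def by simp
  finally have ame: "a^m * e = u^m * e" .
  have "a^m = a^m * p + a^m * e" using pe by (metis distrib_left mult_1_right)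
  hence am: "a^m = e * u^m" using amp ame ce[of "u^m"] by simp
  have au1: "a*u = u*a"
  proof -
    have u: "u = a - p" using h(3) by simp
    have "a*(a-p) = a*a - a*p" by (simp add: right_diff_distrib)
    also have "\<dots> = a*a - p*a" using cp[of a] by simp
    also have "\<dots> = (a-p)*a" by (simp add: left_diff_distrib)
    finally show ?thesis using u by simp
  qed
  have au: "a*u^m = u^m*a" using pow_commute[OF au1[symmetric]] by simp
  have "is_unit (u^m)" unfolding is_unit_def using unit_pow[OF w] by blast
  moreover have "projection st e" unfolding e_def by (rule proj_compl[OF S h(1)])
  ultimately show "\<exists>e u m. projection st e \<and> is_unit u \<and> m \<ge> 1 \<and> a ^ m = e * u \<and>
        a * e = e * a \<and> a * u = u * a \<and> e * u = u * e"
    using am au ce[of a] ce[of "u^m"] unfolding m_def by (metis le_add1 plus_1_eq_Suc m_def)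
qed


theorem theorem3p6:
  fixes st :: "'a::ring_1 \<Rightarrow> 'a"
  assumes "star_ring st"
  shows
   "(strongly_pi_star_regular st \<longleftrightarrow>
       (pi_regular TYPE('a) \<and> (\<forall>e::'a. idempotent e \<longrightarrow> projection st e)))
    \<and> (strongly_pi_star_regular st \<longleftrightarrow>
       ((\<forall>a::'a. \<exists>n\<ge>1. \<exists>p. projection st p \<and> right_ideal_gen (a ^ n) = right_ideal_gen p)
        \<and> abelian_ring TYPE('a)))
    \<and> (strongly_pi_star_regular st \<longleftrightarrow>
       (\<forall>a::'a. \<exists>n\<ge>1. strongly_star_regular st (a ^ n)))
    \<and> (strongly_pi_star_regular st \<longleftrightarrow>
       ((\<forall>a::'a. \<exists>p u. projection st p \<and> is_unit u \<and> a = p + u \<and> nilpotent (a * p))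
        \<and> (\<forall>v q w. is_unit v \<and> projection st q \<and> v * w = 1 \<and> w * v = 1
                  \<longrightarrow> projection st (w * q * v))))"
  proof -
  let ?P1 = "strongly_pi_star_regular st"
  let ?P2 = "pi_regular TYPE('a) \<and> (\<forall>e::'a. idempotent e \<longrightarrow> projection st e)"
  have e12: "?P1 \<longleftrightarrow> ?P2" using s12[OF assms] s21[OF assms] by blast
  have e13: "?P1 \<longleftrightarrow> ((\<forall>a::'a. \<exists>n\<ge>1. \<exists>p. projection st p \<and> right_ideal_gen (a ^ n) = right_ideal_gen p)
        \<and> abelian_ring TYPE('a))"
    using e12 s23[OF assms] s32[OF assms] by blast
  have e14: "?P1 \<longleftrightarrow> (\<forall>a::'a. \<exists>n\<ge>1. strongly_star_regular st (a ^ n))"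
    using e12 s14 s42 by blast
  have e15: "?P1 \<longleftrightarrow> ((\<forall>a::'a. \<exists>p u. projection st p \<and> is_unit u \<and> a = p + u \<and> nilpotent (a * p))
        \<and> (\<forall>v q w. is_unit v \<and> projection st q \<and> v * w = 1 \<and> w * v = 1
                  \<longrightarrow> projection st (w * q * v)))"
    using s15[OF assms] s51[OF assms] by blast
  show ?thesis using e12 e13 e14 e15 by blast
qed

end
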